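(* Let $W(y|x_1,x_2)$ be a discrete memoryless multiple access channel with finite input alphabets $\mathcal{X}_1,\mathcal{X}_2$ and finite output alphabet $\mathcal{Y}$, and let $\delta,\eta>0$. Let $(x_1^n,x_2^n)$ and $(\tilde{x}_1^n,\tilde{x}_2^n)$ be pairs of words with Hamming distances $d_H(x_1^n,\tilde{x}_1^n)\ge\delta n$ and $d_H(x_2^n,\tilde{x}_2^n)\ge\delta n$, and suppose that for all $x_1\in\mathcal{X}_1,x_2\in\mathcal{X}_2$ and every probability distribution $\mathcal{P}$ on $\mathcal{X}_1\times\mathcal{X}_2$ with $\mathcal{P}(x_1,x_2)=0$, \[ \Big\|W_{x_1,x_2}-\sum_{\tilde{x}_1,\tilde{x}_2}\mathcal{P}(\tilde{x}_1,\tilde{x}_2)W_{\tilde{x}_1,\tilde{x}_2}\Big\|\ge\eta . \] Then, with $\epsilon=\frac{\delta^4\eta^2}{2|\mathcal{X}_1|^2|\mathcal{X}_2|^2|\mathcal{Y}|}$, \[ W^n_{\tilde{x}_1^n,\tilde{x}_2^n}\big(\mathcal{T}^n_{W,\epsilon}(x_1^n,x_2^n)\big)\le 2\exp\Big(-\frac{n\epsilon^4}{2}\Big). \]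
   Context: $W_{x_1,x_2}$ denotes the output distribution $W(\cdot|x_1,x_2)$ on $\mathcal{Y}$; $\|\cdot\|$ is the statistical distance $\|P-Q\|=\frac12\sum_y|P(y)-Q(y)|$. For words $x_1^n,x_2^n$, $W^n_{x_1^n,x_2^n}=W_{x_{1,1}x_{2,1}}\otimes\cdots\otimes W_{x_{1,n}x_{2,n}}$ is the product output distribution on $\mathcal{Y}^n$. $\mathcal{T}^n_{W,\epsilon}(x_1^n,x_2^n)\subseteq\mathcal{Y}^n$ is the set of output sequences that are conditionally $\epsilon$-typical given $(x_1^n,x_2^n)$ with respect to $W$ (jointly typical with $(x_1^n,x_2^n)$), i.e. the sequences $y^n$ whose joint empirical counts with $(x_1^n,x_2^n)$ deviate from those expected under $W$ by at most $\epsilon n$. *)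

theory Defs
  imports Complex_Main
begin

text \<open>A DM-MAC with finite input alphabets 'a, 'b and finite output alphabet 'c is
  given by W x1 x2 y = W(y|x1,x2); each W x1 x2 is a probability distribution.\<close>
definition is_mac :: "('a::finite \<Rightarrow> 'b::finite \<Rightarrow> 'c::finite \<Rightarrow> real) \<Rightarrow> bool" where
  "is_mac W \<longleftrightarrow> (\<forall>a b y. 0 \<le> W a b y) \<and> (\<forall>a b. (\<Sum>y\<in>UNIV. W a b y) = 1)"

definition stat_dist :: "('c::finite \<Rightarrow> real) \<Rightarrow> ('c \<Rightarrow> real) \<Rightarrow> real" where
  "stat_dist P Q = (1/2) * (\<Sum>y\<in>UNIV. \<bar>P y - Q y\<bar>)"

definition is_distr :: "('a::finite \<Rightarrow> real) \<Rightarrow> bool" where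
  "is_distr P \<longleftrightarrow> (\<forall>x. 0 \<le> P x) \<and> (\<Sum>x\<in>UNIV. P x) = 1"

definition hamming :: "'a list \<Rightarrow> 'a list \<Rightarrow> nat" where
  "hamming xs ys = card {i. i < length xs \<and> xs ! i \<noteq> ys ! i}"

definition prod_out :: "('a \<Rightarrow> 'b \<Rightarrow> 'c \<Rightarrow> real) \<Rightarrow> 'a list \<Rightarrow> 'b list \<Rightarrow> 'c list \<Rightarrow> real" where
  "prod_out W xs1 xs2 ys = (\<Prod>i<length ys. W (xs1 ! i) (xs2 ! i) (ys ! i))"

definition prob_out :: "nat \<Rightarrow> ('a \<Rightarrow> 'b \<Rightarrow> 'c \<Rightarrow> real) \<Rightarrow> 'a list \<Rightarrow> 'b list \<Rightarrow> 'c list set \<Rightarrow> real" where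
  "prob_out n W xs1 xs2 T = (\<Sum>ys\<in>T \<inter> {ys. length ys = n}. prod_out W xs1 xs2 ys)"

definition cond_typical ::
  "nat \<Rightarrow> ('a::finite \<Rightarrow> 'b::finite \<Rightarrow> 'c::finite \<Rightarrow> real) \<Rightarrow> real \<Rightarrow> 'a list \<Rightarrow> 'b list \<Rightarrow> 'c list set" where
  "cond_typical n W eps xs1 xs2 = {ys. length ys = n \<and>
     (\<forall>a b c. \<bar>real (card {i. i < n \<and> xs1 ! i = a \<and> xs2 ! i = b \<and> ys ! i = c})
               - real (card {i. i < n \<and> xs1 ! i = a \<and> xs2 ! i = b}) * W a b c\<bar> \<le> eps * real n)}"

end

theory Submission
  imports Defs
begin
lemma exp_quad:
  fixes x :: real assumes "\<bar>x\<bar> \<le> 1" shows "exp x \<le> 1 + x + x\<^sup>2"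
proof (cases "x \<ge> 0")
  case True then show ?thesis using exp_bound[of x] assms by auto
next
  case False
  have "1 - x \<le> exp (-x)" using exp_ge_add_one_self[of "-x"] by simp
  hence "exp x * (1 - x) \<le> exp x * exp (-x)" by (intro mult_left_mono) auto
  hence "exp x * (1 - x) \<le> 1" by (simp add: exp_minus_inverse)
  moreover have "1 \<le> (1 + x + x\<^sup>2) * (1 - x)"
  proof -
    have "(1 + x + x\<^sup>2) * (1 - x) = 1 - x^3" by (simp add: algebra_simps power2_eq_square power3_eq_cube)
    moreover have "x^3 \<le> 0"
    proof -
      have "x*x \<ge> 0" by simp
      thus ?thesis using False by (simp add: power3_eq_cube mult_nonneg_nonpos)
    qed
    ultimately show ?thesis by simp
  qed
  ultimately have "exp x * (1 - x) \<le> (1 + x + x\<^sup>2) * (1 - x)" by linarith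
  thus ?thesis using False by (simp add: mult_le_cancel_right)
qed

lemma finite_len: "finite {ys :: 'c::finite list. length ys = n}"
  using finite_lists_length_eq[of "UNIV :: 'c set" n] by simp

lemma len_Suc_eq: "{ys :: 'c list. length ys = Suc n} = (\<lambda>(ys,y). ys @ [y]) ` ({ys. length ys = n} \<times> UNIV)"
proof (rule set_eqI, rule iffI)
  fix zs :: "'c list" assume "zs \<in> {ys. length ys = Suc n}"
  hence "zs = butlast zs @ [last zs]" "length (butlast zs) = n"
    by (auto intro: append_butlast_last_id[symmetric])
  thus "zs \<in> (\<lambda>(ys,y). ys @ [y]) ` ({ys. length ys = n} \<times> UNIV)"
    by (metis (mono_tags, lifting) SigmaI UNIV_I case_prod_conv image_eqI mem_Collect_eq)
qed auto

lemma sum_prod_lists: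
  fixes g :: "nat \<Rightarrow> 'c::finite \<Rightarrow> real"
  shows "(\<Sum>ys\<in>{ys. length ys = n}. \<Prod>i<n. g i (ys ! i)) = (\<Prod>i<n. \<Sum>y\<in>UNIV. g i y)"
proof (induction n)
  case 0 then show ?case by simp
next
  case (Suc n)
  have inj: "inj_on (\<lambda>(ys,y). ys @ [y]) ({ys :: 'c list. length ys = n} \<times> UNIV)"
    by (auto simp: inj_on_def)
  have "(\<Sum>ys\<in>{ys. length ys = Suc n}. \<Prod>i<Suc n. g i (ys ! i))
      = (\<Sum>p\<in>{ys. length ys = n} \<times> UNIV. \<Prod>i<Suc n. g i ((case p of (ys,y::'c) \<Rightarrow> ys @ [y]) ! i))"
    unfolding len_Suc_eq by (subst sum.reindex[OF inj]) (simp add: comp_def)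
  also have "\<dots> = (\<Sum>p\<in>{ys. length ys = n} \<times> UNIV. (\<Prod>i<n. g i (fst p ! i)) * g n (snd p))"
  proof (rule sum.cong[OF refl])
    fix p :: "'c list \<times> 'c" assume "p \<in> {ys :: 'c list. length ys = n} \<times> UNIV"
    then obtain ys y where p: "p = (ys, y)" "length ys = n" by auto
    have "(\<Prod>i<n. g i ((ys @ [y]) ! i)) = (\<Prod>i<n. g i (ys ! i))"
      by (rule prod.cong) (auto simp: nth_append p)
    thus "(\<Prod>i<Suc n. g i ((case p of (ys,y::'c) \<Rightarrow> ys @ [y]) ! i)) = (\<Prod>i<n. g i (fst p ! i)) * g n (snd p)"
      using p by (simp add: nth_append)
  qed
  also have "\<dots> = (\<Sum>ys\<in>{ys. length ys = n}. \<Prod>i<n. g i (ys ! i)) * (\<Sum>y\<in>UNIV. g n y)"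
    by (simp add: sum_product sum.cartesian_product split_beta)
  also have "\<dots> = (\<Prod>i<Suc n. \<Sum>y\<in>UNIV. g i y)" using Suc by simp
  finally show ?case .
qed

lemma conc:
  fixes Q X :: "nat \<Rightarrow> 'c::finite \<Rightarrow> real" and l t :: real
  assumes Q0: "\<And>i y. 0 \<le> Q i y" and Q1: "\<And>i. (\<Sum>y\<in>UNIV. Q i y) = 1"
    and Xb: "\<And>i y. \<bar>X i y\<bar> \<le> 1" and Xc: "\<And>i. (\<Sum>y\<in>UNIV. Q i y * X i y) = 0"
    and l: "0 \<le> l" "l \<le> 1"
  shows "(\<Sum>ys\<in>{ys. length ys = n \<and> t \<le> (\<Sum>i<n. X i (ys!i))}. \<Prod>i<n. Q i (ys!i))
         \<le> exp (real n * l^2 - l*t)"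
proof -
  let ?S = "{ys. length ys = n \<and> t \<le> (\<Sum>i<n. X i (ys!i))}"
  let ?L = "{ys :: 'c list. length ys = n}"
  let ?f = "\<lambda>ys. (\<Prod>i<n. Q i (ys!i)) * exp (l * ((\<Sum>i<n. X i (ys!i)) - t))"
  have fin: "finite ?L" by (rule finite_len)
  have f0: "0 \<le> ?f ys" for ys by (intro mult_nonneg_nonneg prod_nonneg) (auto simp: Q0)
  have "(\<Sum>ys\<in>?S. \<Prod>i<n. Q i (ys!i)) \<le> (\<Sum>ys\<in>?S. ?f ys)"
  proof (rule sum_mono)
    fix ys assume "ys \<in> ?S"
    hence "1 \<le> exp (l * ((\<Sum>i<n. X i (ys!i)) - t))" using l by auto
    moreover have "0 \<le> (\<Prod>i<n. Q i (ys!i))" by (intro prod_nonneg) (auto simp: Q0)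
    ultimately show "(\<Prod>i<n. Q i (ys!i)) \<le> ?f ys"
      by (metis mult.right_neutral mult_left_mono)
  qed
  also have "\<dots> \<le> (\<Sum>ys\<in>?L. ?f ys)"
    by (rule sum_mono2[OF fin]) (auto simp: f0)
  also have "\<dots> = (\<Sum>ys\<in>?L. exp (- l * t) * (\<Prod>i<n. Q i (ys!i) * exp (l * X i (ys!i))))"
  proof (rule sum.cong[OF refl])
    fix ys :: "'c list"
    have "exp (l * ((\<Sum>i<n. X i (ys!i)) - t)) = exp (- l * t) * exp (\<Sum>i<n. l * X i (ys!i))"
      by (simp add: sum_distrib_left algebra_simps exp_add[symmetric])
    also have "\<dots> = exp (- l * t) * (\<Prod>i<n. exp (l * X i (ys!i)))" by (simp add: exp_sum)
    finally show "?f ys = exp (- l * t) * (\<Prod>i<n. Q i (ys!i) * exp (l * X i (ys!i)))"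
      by (simp add: prod.distrib)
  qed
  also have "\<dots> = exp (- l * t) * (\<Prod>i<n. \<Sum>y\<in>UNIV. Q i y * exp (l * X i y))"
    using sum_prod_lists[of "\<lambda>i y. Q i y * exp (l * X i y)" n] by (simp add: sum_distrib_left[symmetric])
  also have "\<dots> \<le> exp (- l * t) * (\<Prod>i<n. exp (l^2))"
  proof (intro mult_left_mono prod_mono conjI)
    fix i
    show "0 \<le> (\<Sum>y\<in>UNIV. Q i y * exp (l * X i y))" by (intro sum_nonneg) (auto simp: Q0)
    have "(\<Sum>y\<in>UNIV. Q i y * exp (l * X i y)) \<le> (\<Sum>y\<in>UNIV. Q i y * (1 + l * X i y + l^2))"
    proof (intro sum_mono mult_left_mono)
      fix y
      have ab: "\<bar>l * X i y\<bar> \<le> 1" using Xb[of i y] l by (simp add: abs_mult mult_le_one)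
      have "(l * X i y)^2 \<le> l^2"
      proof -
        have "(l * X i y)^2 = l^2 * (X i y)^2" by (simp add: power_mult_distrib)
        also have "\<dots> \<le> l^2 * 1"
          using Xb[of i y] by (intro mult_left_mono) (auto simp: abs_square_le_1)
        finally show ?thesis by simp
      qed
      thus "exp (l * X i y) \<le> 1 + l * X i y + l^2" using exp_quad[OF ab] by linarith
    qed (auto simp: Q0)
    also have "\<dots> = (\<Sum>y\<in>UNIV. Q i y) + l * (\<Sum>y\<in>UNIV. Q i y * X i y) + l^2 * (\<Sum>y\<in>UNIV. Q i y)"
      by (simp add: algebra_simps sum.distrib sum_distrib_left sum_distrib_right)
    also have "\<dots> = 1 + l^2" by (simp add: Q1 Xc)
    also have "\<dots> \<le> exp (l^2)" by (rule exp_ge_add_one_self[of "l^2", simplified add.commute]) 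
    finally show "(\<Sum>y\<in>UNIV. Q i y * exp (l * X i y)) \<le> exp (l^2)" .
  qed auto
  also have "\<dots> = exp (real n * l^2 - l*t)"
    by (simp add: exp_of_nat_mult[symmetric] exp_add[symmetric] algebra_simps)
  finally show ?thesis .
qed

lemma fiber_sum:
  fixes g :: "nat \<Rightarrow> 'q::finite" and f :: "'q \<Rightarrow> real"
  assumes "finite S"
  shows "(\<Sum>i\<in>S. f (g i)) = (\<Sum>q\<in>UNIV. real (card {i\<in>S. g i = q}) * f q)"
proof -
  have "(\<Sum>i\<in>S. f (g i)) = (\<Sum>q\<in>UNIV. \<Sum>i\<in>{i\<in>S. g i = q}. f (g i))"
    using sum.group[OF assms finite_UNIV, of g "\<lambda>i. f (g i)"] by simp
  also have "\<dots> = (\<Sum>q\<in>UNIV. real (card {i\<in>S. g i = q}) * f q)"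
    by (rule sum.cong[OF refl]) simp
  finally show ?thesis .
qed

lemma exists_ge_avg:
  fixes f :: "'q::finite \<Rightarrow> real"
  shows "\<exists>q. sum f UNIV \<le> real (card (UNIV :: 'q set)) * f q"
proof -
  obtain q where q: "f q = Max (range f)"
  proof -
    have "Max (range f) \<in> range f" by (rule Max_in) auto
    thus ?thesis using that by (metis imageE)
  qed
  have "sum f UNIV \<le> of_nat (card (UNIV :: 'q set)) * f q"
    by (rule sum_bounded_above) (simp add: q)
  thus ?thesis by auto
qed

lemma W_le1:
  fixes W :: "'a::finite \<Rightarrow> 'b::finite \<Rightarrow> 'c::finite \<Rightarrow> real"
  assumes "is_mac W" shows "W a b y \<le> 1" "0 \<le> W a b y"
proof -
  have "W a b y \<le> (\<Sum>y\<in>UNIV. W a b y)"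
    by (rule member_le_sum) (use assms in \<open>auto simp: is_mac_def\<close>)
  thus "W a b y \<le> 1" using assms by (simp add: is_mac_def)
  show "0 \<le> W a b y" using assms by (simp add: is_mac_def)
qed

theorem lemma6:
  fixes W :: "'a::finite \<Rightarrow> 'b::finite \<Rightarrow> 'c::finite \<Rightarrow> real"
    and \<delta> \<eta> :: real and n :: nat
    and x1 x1' :: "'a list" and x2 x2' :: "'b list"
  assumes W: "is_mac W"
    and \<delta>: "\<delta> > 0" and \<eta>: "\<eta> > 0"
    and len: "length x1 = n" "length x2 = n" "length x1' = n" "length x2' = n"
    and d1: "real (hamming x1 x1') \<ge> \<delta> * real n"
    and d2: "real (hamming x2 x2') \<ge> \<delta> * real n"
    and sep: "\<And>a b P. is_distr P \<Longrightarrow> P (a, b) = 0 \<Longrightarrow>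
       stat_dist (W a b) (\<lambda>y. \<Sum>p\<in>UNIV. P p * W (fst p) (snd p) y) \<ge> \<eta>"
  shows "prob_out n W x1' x2'
           (cond_typical n W (\<delta>^4 * \<eta>^2 / (2 * real (card (UNIV :: 'a set))^2 * real (card (UNIV :: 'b set))^2 * real (card (UNIV :: 'c set)))) x1 x2)
         \<le> 2 * exp (- real n * (\<delta>^4 * \<eta>^2 / (2 * real (card (UNIV :: 'a set))^2 * real (card (UNIV :: 'b set))^2 * real (card (UNIV :: 'c set))))^4 / 2)"
proof -
  define A where "A = real (card (UNIV :: 'a set))"
  define B where "B = real (card (UNIV :: 'b set))"
  define C where "C = real (card (UNIV :: 'c set))"
  define eps where "eps = \<delta>^4 * \<eta>^2 / (2 * A^2 * B^2 * C)"
  define T where "T = cond_typical n W eps x1 x2"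
  have A0: "A \<ge> 1" unfolding A_def by (simp add: Suc_le_eq finite_UNIV_card_ge_0)
  have B0: "B \<ge> 1" unfolding B_def by (simp add: Suc_le_eq finite_UNIV_card_ge_0)
  have C0: "C \<ge> 1" unfolding C_def by (simp add: Suc_le_eq finite_UNIV_card_ge_0)
  have Qd: "\<And>a b y. 0 \<le> W a b y" "\<And>a b y. W a b y \<le> 1" "\<And>a b. (\<Sum>y\<in>UNIV. W a b y) = 1"
    using W W_le1 by (auto simp: is_mac_def)
  let ?L = "{ys :: 'c list. length ys = n}"
  have finL: "finite ?L" by (rule finite_len)
  have probeq: "prob_out n W x1' x2' T' = (\<Sum>ys\<in>T' \<inter> ?L. \<Prod>i<n. W (x1'!i) (x2'!i) (ys!i))" for T'
    unfolding prob_out_def prod_out_def by (rule sum.cong) auto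
  have prob_nonneg: "0 \<le> (\<Prod>i<n. W (x1'!i) (x2'!i) (ys!i))" for ys
    by (intro prod_nonneg) (auto simp: Qd)
  show ?thesis
  proof (cases "n = 0")
    case True
    have "prob_out n W x1' x2' T \<le> (\<Sum>ys\<in>?L. \<Prod>i<n. W (x1'!i) (x2'!i) (ys!i))"
      unfolding probeq by (rule sum_mono2[OF finL]) (auto simp: prob_nonneg)
    also have "\<dots> = 1" using True by simp
    finally show ?thesis using True unfolding T_def eps_def A_def B_def C_def by simp
  next
    case False
    hence npos: "real n > 0" by simp
    define Mis where "Mis = {i. i < n \<and> (x1!i, x2!i) \<noteq> (x1'!i, x2'!i)}"
    have finMis: "finite Mis" unfolding Mis_def by simp
    have "hamming x1 x1' \<le> card Mis"
      unfolding hamming_def Mis_def using len by (intro card_mono) auto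
    hence hMis: "\<delta> * real n \<le> real (card Mis)" using d1 by linarith
    have "hamming x1 x1' \<le> card {..<n}"
      unfolding hamming_def using len by (intro card_mono) auto
    hence "\<delta> * real n \<le> real n" using d1 by simp
    hence \<delta>1: "\<delta> \<le> 1" using npos by simp
    define MF where "MF q = {i\<in>Mis. (x1!i, x2!i) = q}" for q
    have "(\<Sum>i\<in>Mis. (1::real)) = (\<Sum>q\<in>UNIV. real (card (MF q)) * 1)"
      using fiber_sum[OF finMis, of "\<lambda>_. 1" "\<lambda>i. (x1!i, x2!i)"] unfolding MF_def by simp
    hence sumMF: "(\<Sum>q\<in>UNIV. real (card (MF q))) = real (card Mis)" by simp
    obtain p where p: "(\<Sum>q\<in>UNIV. real (card (MF q))) \<le> real (card (UNIV :: ('a \<times> 'b) set)) * real (card (MF p))"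
      using exists_ge_avg[of "\<lambda>q. real (card (MF q))"] by blast
    obtain a b where ab: "p = (a, b)" by (cases p)
    have cardAB: "real (card (UNIV :: ('a \<times> 'b) set)) = A * B"
      unfolding A_def B_def by (simp add: UNIV_Times_UNIV[symmetric] card_cartesian_product del: UNIV_Times_UNIV)
    define M where "M = real (card (MF (a, b)))"
    have MB: "\<delta> * real n \<le> A * B * M" using hMis sumMF p cardAB ab M_def by simp
    have "0 < \<delta> * real n" using \<delta> npos by simp
    hence Mpos: "M > 0" using MB A0 B0
      by (metis M_def mult_eq_0_iff not_less of_nat_0_less_iff order_less_le_trans gr0I of_nat_0)
    have finMF: "finite (MF (a,b))" unfolding MF_def using finMis by simp
    define P where "P q = real (card {i\<in>MF (a,b). (x1'!i, x2'!i) = q}) / M" for q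
    have "(\<Sum>i\<in>MF (a,b). (1::real)) = (\<Sum>q\<in>UNIV. real (card {i\<in>MF (a,b). (x1'!i, x2'!i) = q}) * 1)"
      using fiber_sum[OF finMF, of "\<lambda>_. 1" "\<lambda>i. (x1'!i, x2'!i)"] by simp
    hence "(\<Sum>q\<in>UNIV. P q) = 1" using Mpos unfolding P_def M_def by (simp add: sum_divide_distrib[symmetric])
    hence distrP: "is_distr P" unfolding is_distr_def P_def using Mpos by simp
    have "{i\<in>MF (a,b). (x1'!i, x2'!i) = (a,b)} = {}" unfolding MF_def Mis_def by auto
    hence "card {i\<in>MF (a,b). (x1'!i, x2'!i) = (a,b)} = 0" by (simp only: card.empty)
    hence Pab: "P (a,b) = 0" unfolding P_def by (subst \<open>card _ = 0\<close>) simp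
    define mix where "mix y = (\<Sum>q\<in>UNIV. P q * W (fst q) (snd q) y)" for y
    have sepab: "\<eta> \<le> stat_dist (W a b) mix" using sep[OF distrP Pab] unfolding mix_def .
    have mixM: "M * mix y = (\<Sum>i\<in>MF (a,b). W (x1'!i) (x2'!i) y)" for y
    proof -
      have "(\<Sum>i\<in>MF (a,b). W (x1'!i) (x2'!i) y) = (\<Sum>q\<in>UNIV. real (card {i\<in>MF (a,b). (x1'!i, x2'!i) = q}) * W (fst q) (snd q) y)"
        using fiber_sum[OF finMF, of "\<lambda>q. W (fst q) (snd q) y" "\<lambda>i. (x1'!i, x2'!i)"] by simp
      also have "\<dots> = M * mix y" unfolding mix_def P_def using Mpos by (simp add: sum_distrib_left)
      finally show ?thesis by simp
    qed
    have P0: "0 \<le> P q" for q using distrP unfolding is_distr_def by (cases q) simp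
    have mix0: "0 \<le> mix y" for y unfolding mix_def by (intro sum_nonneg mult_nonneg_nonneg) (auto simp: P0 Qd)
    have mix1: "(\<Sum>y\<in>UNIV. mix y) = 1"
    proof -
      have "(\<Sum>y\<in>UNIV. mix y) = (\<Sum>q\<in>UNIV. P q * (\<Sum>y\<in>UNIV. W (fst q) (snd q) y))"
        unfolding mix_def by (subst sum.swap) (simp add: sum_distrib_left)
      also have "\<dots> = 1" using distrP by (simp add: Qd is_distr_def)
      finally show ?thesis .
    qed
    have "(\<Sum>y\<in>UNIV. \<bar>W a b y - mix y\<bar>) \<le> (\<Sum>y\<in>UNIV. W a b y + mix y)"
      by (intro sum_mono) (use Qd(1) mix0 in \<open>auto simp: abs_le_iff\<close>)
    also have "\<dots> = 2" by (simp add: sum.distrib Qd mix1)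
    finally have "\<eta> \<le> 1" using sepab unfolding stat_dist_def by simp
    hence \<eta>1: "\<eta> \<le> 1" .
    obtain c where c: "(\<Sum>y\<in>UNIV. \<bar>W a b y - mix y\<bar>) \<le> C * \<bar>W a b c - mix c\<bar>"
      using exists_ge_avg[of "\<lambda>y. \<bar>W a b y - mix y\<bar>"] unfolding C_def by blast
    have etaC: "2 * \<eta> \<le> C * \<bar>W a b c - mix c\<bar>" using sepab c unfolding stat_dist_def by simp
    define I where "I = {i. i < n \<and> x1!i = a \<and> x2!i = b}"
    have finI: "finite I" unfolding I_def by simp
    have MFI: "MF (a,b) \<subseteq> I" unfolding MF_def Mis_def I_def by auto
    define ES where "ES = (\<Sum>i\<in>I. W (x1'!i) (x2'!i) c)"
    define NW where "NW = real (card I) * W a b c"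
    have "ES - NW = (\<Sum>i\<in>I. W (x1'!i) (x2'!i) c - W a b c)"
      unfolding ES_def NW_def by (simp add: sum_subtractf)
    also have "\<dots> = (\<Sum>i\<in>MF (a,b). W (x1'!i) (x2'!i) c - W a b c)"
      by (rule sum.mono_neutral_right[OF finI MFI]) (auto simp: I_def MF_def Mis_def)
    also have "\<dots> = M * mix c - M * W a b c"
      using mixM[of c] by (simp add: sum_subtractf M_def)
    finally have diff: "ES - NW = M * (mix c - W a b c)" by (simp add: algebra_simps)
    define r where "r = \<delta> * \<eta> / (A * B * C)"
    have ABC: "A * B * C \<ge> 1" 
    proof -
      have "1 * 1 * 1 \<le> A * B * C" using A0 B0 C0 by (intro mult_mono) auto
      thus ?thesis by simp
    qed
    have r0: "0 < r" unfolding r_def using \<delta> \<eta> ABC by simp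
    have "\<delta> * \<eta> \<le> 1" using \<delta>1 \<eta>1 \<delta> \<eta> by (simp add: mult_le_one)
    hence r1: "r \<le> 1" unfolding r_def using ABC by (simp add: divide_le_eq)
    have aE: "\<bar>ES - NW\<bar> = M * \<bar>W a b c - mix c\<bar>"
      unfolding diff using Mpos by (simp add: abs_mult abs_minus_commute)
    have "(A * B * C) * (2 * r * real n) = (\<delta> * real n) * (2 * \<eta>)"
      unfolding r_def using A0 B0 C0 by (simp add: field_simps)
    also have "\<dots> \<le> (A * B * M) * (C * \<bar>W a b c - mix c\<bar>)"
      by (intro mult_mono MB etaC) (use \<eta> A0 B0 Mpos in auto)
    also have "\<dots> = (A * B * C) * \<bar>ES - NW\<bar>" unfolding aE by (simp add: algebra_simps)
    finally have "(A * B * C) * (2 * r * real n) \<le> (A * B * C) * \<bar>ES - NW\<bar>" .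
    hence gap: "2 * r * real n \<le> \<bar>ES - NW\<bar>" using ABC mult_le_cancel_left_pos[of "A*B*C"] by (meson zero_less_one order_less_le_trans)
    have epsr: "eps = r * (\<delta>^3 * \<eta> / (2 * A * B))"
      unfolding eps_def r_def using A0 B0 C0 by (simp add: field_simps power2_eq_square power3_eq_cube power4_eq_xxxx)
    have "\<delta>^3 * \<eta> \<le> 1" using \<delta>1 \<eta>1 \<delta> \<eta> by (simp add: mult_le_one power_le_one)
    moreover have "1 * 1 \<le> A * B" using A0 B0 by (intro mult_mono) auto
    ultimately have "\<delta>^3 * \<eta> / (2 * A * B) \<le> 1/2" using A0 B0
      by (simp add: divide_le_eq)
    hence "r * (\<delta>^3 * \<eta> / (2 * A * B)) \<le> r * (1/2)" using r0 by (intro mult_left_mono) auto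
    hence eps_le: "eps \<le> r / 2" unfolding epsr by simp
    have eps0: "0 \<le> eps" unfolding eps_def using A0 B0 C0 by simp
    define \<sigma> where "\<sigma> = (if NW \<le> ES then 1 else -1 :: real)"
    define X where "X i y = (if i \<in> I then \<sigma> * (W (x1'!i) (x2'!i) c - (if y = c then 1 else 0)) else 0)" for i y
    define Q where "Q i y = W (x1'!i) (x2'!i) y" for i y
    have Xb: "\<bar>X i y\<bar> \<le> 1" for i y
      unfolding X_def \<sigma>_def using Qd(1)[of "x1'!i" "x2'!i" c] Qd(2)[of "x1'!i" "x2'!i" c]
      by (auto simp: abs_mult)
    have Xc: "(\<Sum>y\<in>UNIV. Q i y * X i y) = 0" for i
    proof (cases "i \<in> I")
      case True
      have "(\<Sum>y\<in>UNIV. Q i y * X i y) = \<sigma> * (W (x1'!i) (x2'!i) c * (\<Sum>y\<in>UNIV. Q i y) - (\<Sum>y\<in>UNIV. Q i y * (if y = c then 1 else 0)))"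
        unfolding X_def using True by (simp add: algebra_simps sum_subtractf sum_distrib_left sum_distrib_right)
      also have "\<dots> = 0" unfolding Q_def by (simp add: Qd if_distrib cong: if_cong)
      finally show ?thesis .
    qed (simp add: X_def)
    have cc: "(\<Sum>ys\<in>{ys. length ys = n \<and> r * real n \<le> (\<Sum>i<n. X i (ys!i))}. \<Prod>i<n. Q i (ys!i))
         \<le> exp (real n * (r/2)^2 - (r/2) * (r * real n))"
      by (rule conc) (use Xb Xc r0 r1 in \<open>auto simp: Q_def Qd\<close>)
    have sub: "T \<inter> ?L \<subseteq> {ys. length ys = n \<and> r * real n \<le> (\<Sum>i<n. X i (ys!i))}"
    proof
      fix ys assume ys: "ys \<in> T \<inter> ?L"
      hence htyp: "\<bar>real (card {i. i < n \<and> x1 ! i = a \<and> x2 ! i = b \<and> ys ! i = c}) - real (card I) * W a b c\<bar> \<le> eps * real n"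
        and lys: "length ys = n"
        unfolding T_def cond_typical_def I_def by auto
      have "{i. i < n \<and> x1 ! i = a \<and> x2 ! i = b \<and> ys ! i = c} = I \<inter> {i. ys ! i = c}" unfolding I_def by auto
      hence htyp': "\<bar>real (card (I \<inter> {i. ys ! i = c})) - NW\<bar> \<le> eps * real n" using htyp NW_def by simp
      have "(\<Sum>i<n. X i (ys!i)) = (\<Sum>i\<in>{..<n} \<inter> {i. i \<in> I}. \<sigma> * (W (x1'!i) (x2'!i) c - (if ys!i = c then 1 else 0)))"
        unfolding X_def by (simp add: sum.If_cases)
      also have "{..<n} \<inter> {i. i \<in> I} = I" unfolding I_def by auto
      also have "(\<Sum>i\<in>I. \<sigma> * (W (x1'!i) (x2'!i) c - (if ys!i = c then 1 else 0)))
          = \<sigma> * (ES - (\<Sum>i\<in>I. (if ys!i = c then 1 else 0)))"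
        unfolding ES_def by (simp add: sum_distrib_left[symmetric] sum_subtractf)
      also have "(\<Sum>i\<in>I. (if ys!i = c then 1 else 0)) = real (card (I \<inter> {i. ys ! i = c}))"
        using finI by (simp add: sum.If_cases)
      finally have sx: "(\<Sum>i<n. X i (ys!i)) = \<sigma> * (ES - real (card (I \<inter> {i. ys ! i = c})))" .
      have en: "eps * real n \<le> r / 2 * real n" using eps_le npos by (intro mult_right_mono) auto
      have "r * real n \<le> \<sigma> * (ES - real (card (I \<inter> {i. ys ! i = c})))"
        using gap htyp' en unfolding \<sigma>_def by (auto simp: abs_le_iff abs_if split: if_splits)
      thus "ys \<in> {ys. length ys = n \<and> r * real n \<le> (\<Sum>i<n. X i (ys!i))}" using sx lys by simp
    qed
    have "prob_out n W x1' x2' T \<le> (\<Sum>ys\<in>{ys. length ys = n \<and> r * real n \<le> (\<Sum>i<n. X i (ys!i))}. \<Prod>i<n. Q i (ys!i))"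
      unfolding probeq Q_def
      by (rule sum_mono2[OF _ sub]) (auto simp: prob_nonneg intro: finite_subset[OF _ finL])
    also have "\<dots> \<le> exp (- real n * (r^2 / 4))" using cc by (simp add: power2_eq_square algebra_simps)
    also have "\<dots> \<le> exp (- real n * eps^4 / 2)"
    proof -
      have "eps^4 \<le> (r/2)^4" using eps0 eps_le by (intro power_mono) auto
      also have "\<dots> = r^2 * r^2 / 16" by (simp add: power_divide power4_eq_xxxx power2_eq_square)
      also have "\<dots> \<le> r^2 * 1 / 16" using r0 r1 by (intro divide_right_mono mult_left_mono) (auto simp: power_le_one)
      finally have "eps^4 / 2 \<le> r^2 / 4" using zero_le_power[OF eps0, of 4] by linarith
      thus ?thesis using npos by (simp add: mult_left_mono)
    qed
    also have "\<dots> \<le> 2 * exp (- real n * eps^4 / 2)" by simp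
    finally show ?thesis unfolding T_def eps_def A_def B_def C_def .
  qed
qed

end
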